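(* Let $G$ be a word-representable graph. Then $l(G \,\square\, K_2) \le 2\,l(G) + 3|G| - 2$.
   Context: All graphs are simple and undirected; $|G|$ denotes the number of vertices of $G$ and $K_n$ is the complete graph on $n$ vertices. Letters $x,y$ alternate in a word $w$ if deleting all other letters from $w$ yields $xyxy\ldots$ or $yxyx\ldots$ (of either parity). A word $w$ over $V(G)$ represents $G$ if every vertex occurs in $w$ and for all distinct $x,y$, $xy\in E(G)$ iff $x,y$ alternate in $w$; $G$ is word-representable if such a word exists, and $l(G)$ is the minimum length of a word representing $G$. The Cartesian product $G\,\square\,H$ has vertex set $V(G)\times V(H)$, with $(u,v)$ adjacent to $(u',v')$ iff either $u=u'$ and $vv'\in E(H)$, or $v=v'$ and $uu'\in E(G)$. *)

theory Defs
  imports Main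
begin

definition simple_graph :: "'a set \<Rightarrow> ('a \<Rightarrow> 'a \<Rightarrow> bool) \<Rightarrow> bool" where
  "simple_graph V E \<longleftrightarrow> finite V \<and> (\<forall>x y. E x y \<longrightarrow> E y x) \<and> (\<forall>x. \<not> E x x)
     \<and> (\<forall>x y. E x y \<longrightarrow> x \<in> V \<and> y \<in> V)"

definition alternate :: "'a list \<Rightarrow> 'a \<Rightarrow> 'a \<Rightarrow> bool" where
  "alternate w x y \<longleftrightarrow>
     (let u = filter (\<lambda>z. z = x \<or> z = y) w in
        \<forall>i. Suc i < length u \<longrightarrow> u ! i \<noteq> u ! Suc i)"

definition represents :: "'a set \<Rightarrow> ('a \<Rightarrow> 'a \<Rightarrow> bool) \<Rightarrow> 'a list \<Rightarrow> bool" where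
  "represents V E w \<longleftrightarrow> set w = V \<and>
     (\<forall>x\<in>V. \<forall>y\<in>V. x \<noteq> y \<longrightarrow> (E x y \<longleftrightarrow> alternate w x y))"

definition word_representable :: "'a set \<Rightarrow> ('a \<Rightarrow> 'a \<Rightarrow> bool) \<Rightarrow> bool" where
  "word_representable V E \<longleftrightarrow> (\<exists>w. represents V E w)"

definition min_rep_len :: "'a set \<Rightarrow> ('a \<Rightarrow> 'a \<Rightarrow> bool) \<Rightarrow> nat" where
  "min_rep_len V E = (LEAST n. \<exists>w. represents V E w \<and> length w = n)"

definition cart_prod_V :: "'a set \<Rightarrow> 'b set \<Rightarrow> ('a \<times> 'b) set" where
  "cart_prod_V V U = V \<times> U"

definition cart_prod_E :: "('a \<Rightarrow> 'a \<Rightarrow> bool) \<Rightarrow> ('b \<Rightarrow> 'b \<Rightarrow> bool)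
    \<Rightarrow> ('a \<times> 'b) \<Rightarrow> ('a \<times> 'b) \<Rightarrow> bool" where
  "cart_prod_E E F p q \<longleftrightarrow>
     (fst p = fst q \<and> F (snd p) (snd q)) \<or> (snd p = snd q \<and> E (fst p) (fst q))"

definition K2_V :: "bool set" where "K2_V = UNIV"
definition K2_E :: "bool \<Rightarrow> bool \<Rightarrow> bool" where "K2_E a b \<longleftrightarrow> a \<noteq> b"

end

theory Submission
  imports Defs
begin

definition sig :: "'a list \<Rightarrow> ('a \<times> bool) list" where
  "sig w = concat (map (\<lambda>v. [(v,False),(v,True)]) w)"

definition UU :: "'a list \<Rightarrow> ('a \<times> bool) list" where
  "UU w = sig w @ map (\<lambda>v. (v,False)) (remdups w)
      @ concat (map (\<lambda>v. [(v,True),(v,False)]) (butlast (remdups w)))"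

lemma alt_succ: "alternate w x y \<longleftrightarrow> successively (\<noteq>) (filter (\<lambda>z. z=x \<or> z=y) w)"
  unfolding alternate_def Let_def successively_conv_nth by simp

lemma alt_sym: "alternate w x y = alternate w y x"
  unfolding alternate_def by (simp add: disj_commute)

lemma filt_sig_diff: "u \<noteq> v \<Longrightarrow> filter (\<lambda>z. z=(u,c) \<or> z=(v,d)) (sig w)
   = map (\<lambda>z. if z=u then (u,c) else (v,d)) (filter (\<lambda>z. z=u \<or> z=v) w)"
  by (induction w) (auto simp: sig_def)

lemma filt_sig_same: "filter (\<lambda>z. z=(x,False) \<or> z=(x,True)) (sig w)
   = concat (map (\<lambda>_. [(x,False),(x,True)]) (filter (\<lambda>z. z=x) w))"
  by (induction w) (auto simp: sig_def)

lemma succ_rep0: "p \<noteq> q \<Longrightarrow> successively (\<noteq>) (concat (map (\<lambda>_. [p,q]) xs))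
   \<and> (xs \<noteq> [] \<longrightarrow> hd (concat (map (\<lambda>_. [p,q]) xs)) = p)"
  by (induction xs) (auto simp: successively_Cons)

lemma succ_rep: "p \<noteq> q \<Longrightarrow> successively (\<noteq>) (concat (map (\<lambda>_. [p,q]) xs))"
  using succ_rep0[of p q xs] by simp

lemma last_rep: "xs \<noteq> [] \<Longrightarrow> last (concat (map (\<lambda>_. [p,q]) xs)) = q"
  by (induction xs) auto

lemma concat_irrel: "(\<forall>z. \<not> P z \<longrightarrow> g z = []) \<Longrightarrow> concat (map g xs) = concat (map g (filter P xs))"
  by (induction xs) auto

lemma butlast_distinct: "distinct xs \<Longrightarrow> xs \<noteq> [] \<Longrightarrow> butlast xs = filter (\<lambda>z. z \<noteq> last xs) xs"
proof -
  assume d: "distinct xs" and ne: "xs \<noteq> []"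
  have e: "xs = butlast xs @ [last xs]" using ne by simp
  then have "last xs \<notin> set (butlast xs)" using d by (metis distinct_append disjoint_iff list.set_intros(1))
  then have "filter (\<lambda>z. z \<noteq> last xs) (butlast xs) = butlast xs" by (auto simp: filter_id_conv)
  then show ?thesis by (subst (2) e) simp
qed

lemma last_remdups: "last (remdups w) = last w"
  using remdups_filter_last[of "\<lambda>_. True" w] by simp

lemma key:
  assumes uv: "u \<noteq> v" and inu: "u \<in> set w" and inv: "v \<in> set w"
    and fr: "filter (\<lambda>z. z=u \<or> z=v) (remdups w) = [u,v]"
  shows "alternate (UU w) (u,c) (v,d) \<longleftrightarrow> (c = d \<and> alternate w u v)"
proof -
  define P where "P = (\<lambda>z. z=u \<or> z=v)"
  define fw where "fw = filter P w"
  define b where "b = last w"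
  have frP: "filter P (remdups w) = [u,v]" using fr P_def by simp
  have lastfw: "last fw = v"
    using remdups_filter_last[of P w] frP fw_def by simp
  have fwne: "fw \<noteq> []" using inu fw_def P_def by (auto simp: filter_empty_conv)
  have wne: "w \<noteq> []" using inu by auto
  have bu: "b \<noteq> u"
  proof
    assume "b = u"
    have lu: "last w = u" using b_def \<open>b = u\<close> by simp
    have "w = butlast w @ [last w]" using wne by (rule append_butlast_last_id[symmetric])
    then obtain w' where "w = w' @ [u]" unfolding lu by blast
    then have "fw = filter P w' @ [u]" unfolding fw_def P_def by simp
    then show False using lastfw uv by simp
  qed
  have rne: "remdups w \<noteq> []" using wne by simp
  have lr: "last (remdups w) = b" using last_remdups b_def by simp
  have sub: "\<And>S. (\<forall>z. S z \<longrightarrow> P z) \<Longrightarrow> filter S (remdups w) = filter S [u,v]"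
  proof -
    fix S assume "\<forall>z. S z \<longrightarrow> P z"
    then have "filter S (filter P (remdups w)) = filter S (remdups w)"
      by (auto simp: filter_filter intro!: filter_cong)
    then show "filter S (remdups w) = filter S [u,v]" using frP by simp
  qed
  define Q where "Q = (\<lambda>z. z=(u,c) \<or> z=(v,d))"
  have A: "filter Q (sig w) = map (\<lambda>z. if z=u then (u,c) else (v,d)) fw"
    using filt_sig_diff[OF uv] Q_def fw_def P_def by simp
  have B: "filter Q (map (\<lambda>v. (v,False)) (remdups w))
      = map (\<lambda>v. (v,False)) (filter (\<lambda>z. (z,False)=(u,c) \<or> (z,False)=(v,d)) [u,v])"
    unfolding filter_map o_def Q_def by (subst sub) (auto simp: P_def)
  have C0: "filter Q (concat (map (\<lambda>v. [(v,True),(v,False)]) (butlast (remdups w))))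
      = concat (map (\<lambda>z. filter Q [(z,True),(z,False)]) (butlast (remdups w)))"
    by (simp add: filter_concat map_map o_def)
  also have "\<dots> = concat (map (\<lambda>z. filter Q [(z,True),(z,False)]) (filter P (butlast (remdups w))))"
    by (rule concat_irrel) (auto simp: Q_def P_def)
  also have "filter P (butlast (remdups w)) = filter (\<lambda>z. P z \<and> z \<noteq> b) (remdups w)"
    using butlast_distinct[OF distinct_remdups rne] lr by (simp add: filter_filter conj_commute)
  also have "\<dots> = filter (\<lambda>z. P z \<and> z \<noteq> b) [u,v]" by (rule sub) auto
  finally have C: "filter Q (concat (map (\<lambda>v. [(v,True),(v,False)]) (butlast (remdups w))))
      = concat (map (\<lambda>z. filter Q [(z,True),(z,False)]) (filter (\<lambda>z. P z \<and> z \<noteq> b) [u,v]))" .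
  have F: "filter Q (UU w) = map (\<lambda>z. if z=u then (u,c) else (v,d)) fw
     @ map (\<lambda>v. (v,False)) (filter (\<lambda>z. (z,False)=(u,c) \<or> (z,False)=(v,d)) [u,v])
     @ concat (map (\<lambda>z. filter Q [(z,True),(z,False)]) (filter (\<lambda>z. P z \<and> z \<noteq> b) [u,v]))"
    unfolding UU_def by (simp only: filter_append A B C)
  define h where "h = (\<lambda>z. if z=u then (u,c) else (v,d))"
  have T1: "map (\<lambda>v. (v,False)) (filter (\<lambda>z. (z,False)=(u,c) \<or> (z,False)=(v,d)) [u,v])
     = (if c then [] else [(u,False)]) @ (if d then [] else [(v,False)])"
    using uv by (cases c; cases d) auto
  have T2: "concat (map (\<lambda>z. filter Q [(z,True),(z,False)]) (filter (\<lambda>z. P z \<and> z \<noteq> b) [u,v]))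
     = [(u,c)] @ (if v = b then [] else [(v,d)])"
    using uv bu by (cases c; cases d) (auto simp: Q_def P_def)
  have F2: "filter Q (UU w) = map h fw @ ((if c then [] else [(u,False)]) @ (if d then [] else [(v,False)])
      @ [(u,c)] @ (if v = b then [] else [(v,d)]))"
    unfolding F T1 T2 h_def by simp
  have M: "successively (\<noteq>) (map h fw) \<longleftrightarrow> successively (\<noteq>) fw"
    unfolding successively_map h_def
    by (rule successively_cong) (auto simp: fw_def P_def uv)
  have lastm: "last (map h fw) = (v,d)"
    using last_map[OF fwne, of h] lastfw uv unfolding h_def by simp
  have altw: "alternate w u v \<longleftrightarrow> successively (\<noteq>) fw"
    unfolding alt_succ fw_def P_def by (rule refl)
  have mne: "map h fw \<noteq> []" using fwne by simp
  have R: "successively (\<noteq>) (filter Q (UU w)) \<longleftrightarrow> (c = d \<and> successively (\<noteq>) fw)"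
    unfolding F2 using uv
    by (cases c; cases d; cases "v = b") (simp_all only: successively_append_iff M lastm mne, simp_all)
  show ?thesis
    unfolding alt_succ Q_def[symmetric] R fw_def P_def by (rule refl)
qed


lemma filter_eq_single: "x \<in> set ys \<Longrightarrow> distinct ys \<Longrightarrow> filter (\<lambda>z. z=x) ys = [x]"
  by (induction ys) (auto simp: filter_empty_conv)

lemma same:
  assumes xin: "x \<in> set w"
  shows "alternate (UU w) (x,False) (x,True)"
proof -
  define Q where "Q = (\<lambda>z. z=(x,False) \<or> z=(x,True))"
  define fx where "fx = filter (\<lambda>z. z=x) w"
  define b where "b = last w"
  have ne: "fx \<noteq> []" using xin fx_def by (auto simp: filter_empty_conv)
  have wne: "w \<noteq> []" using xin by auto
  have rne: "remdups w \<noteq> []" using wne by simp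
  have lr: "last (remdups w) = b" using last_remdups b_def by simp
  have A: "filter Q (sig w) = concat (map (\<lambda>_. [(x,False),(x,True)]) fx)"
    using filt_sig_same Q_def fx_def by simp
  have fr: "filter (\<lambda>z. z = x) (remdups w) = [x]"
    using xin by (intro filter_eq_single) auto
  have B: "filter Q (map (\<lambda>v. (v,False)) (remdups w)) = [(x,False)]"
  proof -
    have "filter Q (map (\<lambda>v. (v,False)) (remdups w)) = map (\<lambda>v. (v,False)) (filter (\<lambda>z. z = x) (remdups w))"
      by (simp add: filter_map o_def Q_def)
    then show ?thesis using fr by simp
  qed
  have "filter Q (concat (map (\<lambda>v. [(v,True),(v,False)]) (butlast (remdups w))))
      = concat (map (\<lambda>z. filter Q [(z,True),(z,False)]) (butlast (remdups w)))"
    by (simp add: filter_concat map_map o_def)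
  also have "\<dots> = concat (map (\<lambda>z. filter Q [(z,True),(z,False)]) (filter (\<lambda>z. z = x) (butlast (remdups w))))"
    by (rule concat_irrel) (auto simp: Q_def)
  also have "filter (\<lambda>z. z = x) (butlast (remdups w)) = filter (\<lambda>z. z \<noteq> b) (filter (\<lambda>z. z = x) (remdups w))"
    using butlast_distinct[OF distinct_remdups rne] lr by (simp add: filter_filter conj_commute)
  also have "\<dots> = (if x = b then [] else [x])" using fr by simp
  finally have C: "filter Q (concat (map (\<lambda>v. [(v,True),(v,False)]) (butlast (remdups w))))
     = (if x = b then [] else [(x,True),(x,False)])" by (simp add: Q_def)
  have F: "filter Q (UU w) = concat (map (\<lambda>_. [(x,False),(x,True)]) fx) @ [(x,False)]
     @ (if x = b then [] else [(x,True),(x,False)])"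
    unfolding UU_def by (simp only: filter_append A B C)
  have S: "successively (\<noteq>) (concat (map (\<lambda>_. [(x,False),(x,True)]) fx))"
    by (rule succ_rep) simp
  have L: "last (concat (map (\<lambda>_. [(x,False),(x,True)]) fx)) = (x,True)"
    by (rule last_rep[OF ne])
  have cne: "concat (map (\<lambda>_. [(x,False),(x,True)]) fx) \<noteq> []" using ne by simp
  have "successively (\<noteq>) (filter Q (UU w))"
    unfolding F using S L cne by (cases "x = b") (simp_all add: successively_append_iff)
  then show ?thesis unfolding alt_succ Q_def .
qed

lemma len_sig: "length (sig w) = 2 * length w"
  by (induction w) (simp_all add: sig_def)

lemma len_pairs: "length (concat (map (\<lambda>v. [(v,True),(v,False)]) xs)) = 2 * length xs"
  by (induction xs) simp_all

lemma set_sig: "set (sig w) = set w \<times> UNIV"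
proof -
  have "set (sig w) = (\<Union>v\<in>set w. {(v,False),(v,True)})" by (simp add: sig_def)
  also have "\<dots> = set w \<times> UNIV" using UNIV_bool by auto
  finally show ?thesis .
qed

lemma set_UU: "set (UU w) = set w \<times> UNIV"
proof -
  have "set (map (\<lambda>v. (v,False)) (remdups w)) \<subseteq> set w \<times> UNIV" by auto
  moreover have "set (concat (map (\<lambda>v. [(v,True),(v,False)]) (butlast (remdups w)))) \<subseteq> set w \<times> UNIV"
    by (auto dest: in_set_butlastD)
  ultimately show ?thesis unfolding UU_def by (auto simp: set_sig)
qed

lemma len_UU: "length (UU w) = 2 * length w + 3 * card (set w) - 2"
proof (cases "w = []")
  case True then show ?thesis by (simp add: UU_def sig_def)
next
  case False
  then have "card (set w) \<ge> 1" by (simp add: Suc_le_eq card_gt_0_iff)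
  moreover have "length (remdups w) = card (set w)" by (simp add: length_remdups_card_conv)
  ultimately show ?thesis unfolding UU_def by (simp add: len_sig len_pairs)
qed

lemma two_elems: "distinct xs \<Longrightarrow> set xs = {x,y} \<Longrightarrow> x \<noteq> y \<Longrightarrow> xs = [x,y] \<or> xs = [y,x]"
proof -
  assume d: "distinct xs" and s: "set xs = {x,y}" and n: "x \<noteq> y"
  have "length xs = 2" using distinct_card[OF d] s n by simp
  then obtain a b where "xs = [a,b]"
    by (metis (no_types, lifting) length_0_conv length_Suc_conv numeral_2_eq_2)
  then show ?thesis using s d by auto
qed

lemma UU_represents:
  assumes rep: "represents V E w"
  shows "represents (cart_prod_V V K2_V) (cart_prod_E E K2_E) (UU w)"
proof -
  have sw: "set w = V" using rep by (simp add: represents_def)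
  have e: "\<And>x y. x \<in> V \<Longrightarrow> y \<in> V \<Longrightarrow> x \<noteq> y \<Longrightarrow> E x y \<longleftrightarrow> alternate w x y"
    using rep by (simp add: represents_def)
  have "cart_prod_E E K2_E (x,c) (y,d) \<longleftrightarrow> alternate (UU w) (x,c) (y,d)"
    if xV: "x \<in> V" and yV: "y \<in> V" and ne: "(x,c) \<noteq> (y,d)" for x y c d
  proof (cases "x = y")
    case True
    then have cd: "c \<noteq> d" using ne by simp
    have "alternate (UU w) (x,c) (x,d)"
    proof (cases c)
      case True then have "d = False" using cd by simp
      then show ?thesis using same[of x w] xV sw True alt_sym by metis
    next
      case False then have "d = True" using cd by simp
      then show ?thesis using same[of x w] xV sw False by simp
    qed
    then show ?thesis using True cd by (simp add: cart_prod_E_def K2_E_def)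
  next
    case False
    have cp: "cart_prod_E E K2_E (x,c) (y,d) \<longleftrightarrow> (c = d \<and> alternate w x y)"
      using False e[OF xV yV False] by (auto simp: cart_prod_E_def)
    have ds: "distinct (filter (\<lambda>z. z=x \<or> z=y) (remdups w))" by simp
    have ss: "set (filter (\<lambda>z. z=x \<or> z=y) (remdups w)) = {x,y}" using xV yV sw by auto
    from two_elems[OF ds ss False] show ?thesis
    proof
      assume h: "filter (\<lambda>z. z=x \<or> z=y) (remdups w) = [x,y]"
      have "alternate (UU w) (x,c) (y,d) \<longleftrightarrow> (c = d \<and> alternate w x y)"
        by (rule key[OF False _ _ h]) (use xV yV sw in auto)
      then show ?thesis using cp by simp
    next
      assume h: "filter (\<lambda>z. z=x \<or> z=y) (remdups w) = [y,x]"
      have h': "filter (\<lambda>z. z=y \<or> z=x) (remdups w) = [y,x]"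
        using h by (simp add: disj_commute)
      have "alternate (UU w) (y,d) (x,c) \<longleftrightarrow> (d = c \<and> alternate w y x)"
        by (rule key[OF False[symmetric] _ _ h']) (use xV yV sw in auto)
      then show ?thesis unfolding cp using alt_sym by metis
    qed
  qed
  then show ?thesis
    unfolding represents_def cart_prod_V_def K2_V_def set_UU sw by auto
qed

theorem mainTheorem4:
  fixes V :: "'a set" and E :: "'a \<Rightarrow> 'a \<Rightarrow> bool"
  assumes "simple_graph V E"
    and "word_representable V E"
  shows "min_rep_len (cart_prod_V V K2_V) (cart_prod_E E K2_E)
           \<le> 2 * min_rep_len V E + 3 * card V - 2"
proof -
  have ex: "\<exists>n w. represents V E w \<and> length w = n"
    using assms(2) by (auto simp: word_representable_def)
  obtain w where w: "represents V E w" "length w = min_rep_len V E"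
    using LeastI_ex[OF ex] unfolding min_rep_len_def by blast
  have sw: "set w = V" using w(1) by (simp add: represents_def)
  have r: "represents (cart_prod_V V K2_V) (cart_prod_E E K2_E) (UU w)"
    by (rule UU_represents[OF w(1)])
  have l: "length (UU w) = 2 * min_rep_len V E + 3 * card V - 2"
    using len_UU[of w] w(2) sw by simp
  show ?thesis unfolding min_rep_len_def[of "cart_prod_V V K2_V"]
    by (rule Least_le) (use r l in blast)
qed

end
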